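(* For every integer $n\geq 2$, both $d(n)$ and $-\frac{d(n)}{n-1}$ are eigenvalues of the adjacency matrix of the permutation graph $P(n)$.
   Context: $d(n)$ is the number of derangements (fixed-point-free permutations) of $\{1,\dots,n\}$. The permutation graph $P(n)$ has vertex set $S(n)$, and $\pi,\sigma$ are adjacent iff $\pi(i)\neq\sigma(i)$ for all $i$. *)

theory Defs
  imports Complex_Main "HOL-Combinatorics.Permutations"
begin

definition perms :: "nat \<Rightarrow> (nat \<Rightarrow> nat) set" where
  "perms n = {p. p permutes {1..n}}"

definition derangements_count :: "nat \<Rightarrow> nat" where
  "derangements_count n = card {p \<in> perms n. \<forall>i\<in>{1..n}. p i \<noteq> i}"

definition perm_graph_adj :: "nat \<Rightarrow> (nat \<Rightarrow> nat) \<Rightarrow> (nat \<Rightarrow> nat) \<Rightarrow> real" where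
  "perm_graph_adj n p q = (if \<forall>i\<in>{1..n}. p i \<noteq> q i then 1 else 0)"

definition is_eigenvalue_on :: "'a set \<Rightarrow> ('a \<Rightarrow> 'a \<Rightarrow> real) \<Rightarrow> real \<Rightarrow> bool" where
  "is_eigenvalue_on I A lam \<longleftrightarrow>
     (\<exists>v :: 'a \<Rightarrow> real. (\<exists>i\<in>I. v i \<noteq> 0) \<and>
        (\<forall>i\<in>I. (\<Sum>j\<in>I. A i j * v j) = lam * v i))"

end

theory Submission
  imports Defs
begin

abbreviation D :: "nat \<Rightarrow> (nat \<Rightarrow> nat) set" where
  "D n \<equiv> {p \<in> perms n. \<forall>i\<in>{1..n}. p i \<noteq> i}"

lemma finite_perms: "finite (perms n)"
  unfolding perms_def by (rule finite_permutations) simp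

lemma cnt:
  assumes hp: "p \<in> perms n"
  shows "card {q \<in> perms n. (\<forall>i\<in>{1..n}. p i \<noteq> q i) \<and> Q (q 1)}
       = card {r \<in> D n. Q (p (r 1))}"
proof -
  have pp: "p permutes {1..n}" using hp by (simp add: perms_def)
  have "bij_betw (\<lambda>r. p \<circ> r) {r \<in> D n. Q (p (r 1))}
          {q \<in> perms n. (\<forall>i\<in>{1..n}. p i \<noteq> q i) \<and> Q (q 1)}"
  proof (rule bij_betw_byWitness[where f'="\<lambda>q. inv p \<circ> q"])
    show "\<forall>a\<in>{r \<in> D n. Q (p (r 1))}. inv p \<circ> (p \<circ> a) = a"
      by (auto simp: fun_eq_iff permutes_inverses[OF pp])
    show "\<forall>a\<in>{q \<in> perms n. (\<forall>i\<in>{1..n}. p i \<noteq> q i) \<and> Q (q 1)}. p \<circ> (inv p \<circ> a) = a"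
      by (auto simp: fun_eq_iff permutes_inverses[OF pp])
    show "(\<circ>) p ` {r \<in> D n. Q (p (r 1))}
        \<subseteq> {q \<in> perms n. (\<forall>i\<in>{1..n}. p i \<noteq> q i) \<and> Q (q 1)}"
      using pp by (auto simp: perms_def permutes_compose permutes_inj inj_eq)
    show "(\<lambda>q. inv p \<circ> q) ` {q \<in> perms n. (\<forall>i\<in>{1..n}. p i \<noteq> q i) \<and> Q (q 1)}
        \<subseteq> {r \<in> D n. Q (p (r 1))}"
      using pp by (auto simp: perms_def permutes_compose permutes_inv permutes_inverses permutes_inv_eq)
  qed
  then show ?thesis by (simp add: bij_betw_same_card)
qed

lemma Dc_eq:
  assumes c: "c \<in> {2..n}" and c': "c' \<in> {2..n}"
  shows "card {r \<in> D n. r 1 = c} = card {r \<in> D n. r 1 = c'}"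
proof -
  let ?t = "Transposition.transpose c c'"
  have tp: "?t permutes {1..n}" using c c' by (intro permutes_swap_id) auto
  have t1: "?t 1 = 1" using c c' by (auto simp: transpose_def)
  have "bij_betw (\<lambda>r. ?t \<circ> r \<circ> ?t) {r \<in> D n. r 1 = c} {r \<in> D n. r 1 = c'}"
  proof (rule bij_betw_byWitness[where f'="\<lambda>r. ?t \<circ> r \<circ> ?t"])
    show "\<forall>a\<in>{r \<in> D n. r 1 = c}. ?t \<circ> (?t \<circ> a \<circ> ?t) \<circ> ?t = a"
      by (auto simp: fun_eq_iff)
    show "\<forall>a\<in>{r \<in> D n. r 1 = c'}. ?t \<circ> (?t \<circ> a \<circ> ?t) \<circ> ?t = a"
      by (auto simp: fun_eq_iff)
    have gen: "?t \<circ> r \<circ> ?t \<in> D n" if "r \<in> D n" for r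
    proof -
      have "?t \<circ> r \<circ> ?t permutes {1..n}"
        using that tp by (auto simp: perms_def intro!: permutes_compose)
      moreover have "?t (r (?t i)) \<noteq> i" if "i \<in> {1..n}" for i
      proof
        assume "?t (r (?t i)) = i"
        then have "r (?t i) = ?t i" by (metis transpose_involutory)
        moreover have "?t i \<in> {1..n}" using permutes_in_image[OF tp] that by simp
        ultimately show False using \<open>r \<in> D n\<close> by auto
      qed
      ultimately show ?thesis by (auto simp: perms_def)
    qed
    show "(\<lambda>r. ?t \<circ> r \<circ> ?t) ` {r \<in> D n. r 1 = c} \<subseteq> {r \<in> D n. r 1 = c'}"
      using gen t1 by auto
    show "(\<lambda>r. ?t \<circ> r \<circ> ?t) ` {r \<in> D n. r 1 = c'} \<subseteq> {r \<in> D n. r 1 = c}"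
      using gen t1 by auto
  qed
  then show ?thesis by (simp add: bij_betw_same_card)
qed

lemma Dc_val:
  assumes c: "c \<in> {2..n}"
  shows "real (card {r \<in> D n. r 1 = c}) = real (derangements_count n) / (real n - 1)"
proof -
  have n2: "n \<ge> 2" using c by auto
  have split: "D n = (\<Union>c\<in>{2..n}. {r \<in> D n. r 1 = c})"
  proof (rule set_eqI, rule iffI)
    fix r assume r: "r \<in> D n"
    then have "r permutes {1..n}" by (simp add: perms_def)
    moreover have "(1::nat) \<in> {1..n}" using n2 by simp
    ultimately have "r 1 \<in> {1..n}" by (simp only: permutes_in_image)
    moreover have "r 1 \<noteq> 1" using r n2 by auto
    ultimately have "r 1 \<in> {2..n}" by auto
    then show "r \<in> (\<Union>c\<in>{2..n}. {r \<in> D n. r 1 = c})" using r by auto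
  qed auto
  have "card (D n) = (\<Sum>c\<in>{2..n}. card {r \<in> D n. r 1 = c})"
    by (subst split, rule card_UN_disjoint) (auto intro: finite_subset[OF _ finite_perms])
  also have "\<dots> = (\<Sum>c'\<in>{2..n}. card {r \<in> D n. r 1 = c})"
    using Dc_eq[OF _ c] by (intro sum.cong) auto
  also have "\<dots> = (n - 1) * card {r \<in> D n. r 1 = c}" by simp
  finally have "real (derangements_count n) = (real n - 1) * real (card {r \<in> D n. r 1 = c})"
    using n2 by (simp add: derangements_count_def of_nat_diff)
  then show ?thesis using n2 by (simp add: field_simps)
qed

theorem lemma7:
  fixes n :: nat
  assumes "n \<ge> 2"
  shows "is_eigenvalue_on (perms n) (perm_graph_adj n) (real (derangements_count n))
       \<and> is_eigenvalue_on (perms n) (perm_graph_adj n)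
            (- real (derangements_count n) / (real n - 1))"
proof
  have idp: "id \<in> perms n" by (simp add: perms_def permutes_id)
  show "is_eigenvalue_on (perms n) (perm_graph_adj n) (real (derangements_count n))"
    unfolding is_eigenvalue_on_def
  proof (intro exI[of _ "\<lambda>_. 1"] conjI ballI)
    show "\<exists>i\<in>perms n. (1::real) \<noteq> 0" using idp by auto
    fix p assume hp: "p \<in> perms n"
    have "(\<Sum>j\<in>perms n. perm_graph_adj n p j * 1)
        = (\<Sum>j\<in>perms n. of_bool ((\<forall>i\<in>{1..n}. p i \<noteq> j i) \<and> True))"
      by (simp add: perm_graph_adj_def of_bool_def)
    also have "\<dots> = real (card {q \<in> perms n. (\<forall>i\<in>{1..n}. p i \<noteq> q i) \<and> True})"
      using finite_perms by (simp add: Int_def)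
    also have "\<dots> = real (derangements_count n)"
      by (subst cnt[OF hp]) (simp add: derangements_count_def)
    finally show "(\<Sum>j\<in>perms n. perm_graph_adj n p j * 1) = real (derangements_count n) * 1"
      by simp
  qed
  define v :: "(nat \<Rightarrow> nat) \<Rightarrow> real" where
    "v = (\<lambda>q. of_bool (q 1 = 1) - of_bool (q 1 = 2))"
  define d where "d = real (derangements_count n) / (real n - 1)"
  show "is_eigenvalue_on (perms n) (perm_graph_adj n) (- real (derangements_count n) / (real n - 1))"
    unfolding is_eigenvalue_on_def
  proof (intro exI[of _ v] conjI ballI)
    show "\<exists>i\<in>perms n. v i \<noteq> 0" by (rule bexI[of _ id]) (simp_all add: v_def idp)
    fix p assume hp: "p \<in> perms n"
    have pp: "p permutes {1..n}" using hp by (simp add: perms_def)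
    have N: "real (card {q \<in> perms n. (\<forall>i\<in>{1..n}. p i \<noteq> q i) \<and> q 1 = b})
             = (if p 1 = b then 0 else d)" if b: "b \<in> {1..n}" for b
    proof -
      have "card {q \<in> perms n. (\<forall>i\<in>{1..n}. p i \<noteq> q i) \<and> q 1 = b}
          = card {r \<in> D n. r 1 = inv p b}"
        by (subst cnt[OF hp]) (metis permutes_inv_eq[OF pp])
      moreover have ib: "inv p b \<in> {1..n}"
        using b permutes_in_image[OF permutes_inv[OF pp]] by simp
      show ?thesis
      proof (cases "p 1 = b")
        case True
        then have "inv p b = 1" by (simp add: permutes_inv_eq[OF pp])
        then have E: "{r \<in> D n. r 1 = inv p b} = {}" using assms by auto
        show ?thesis using True \<open>card _ = card _\<close> by (simp only: E card.empty of_nat_0 if_True refl)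
      next
        case False
        then have "inv p b \<noteq> 1" by (simp add: permutes_inv_eq[OF pp])
        then have "inv p b \<in> {2..n}" using ib by auto
        then show ?thesis using False \<open>card _ = card _\<close> Dc_val d_def by simp
      qed
    qed
    have "(\<Sum>j\<in>perms n. perm_graph_adj n p j * v j)
        = (\<Sum>j\<in>perms n. of_bool ((\<forall>i\<in>{1..n}. p i \<noteq> j i) \<and> j 1 = 1)
                         - of_bool ((\<forall>i\<in>{1..n}. p i \<noteq> j i) \<and> j 1 = 2))"
      by (intro sum.cong) (simp_all add: perm_graph_adj_def v_def)
    also have "\<dots> = real (card {q \<in> perms n. (\<forall>i\<in>{1..n}. p i \<noteq> q i) \<and> q 1 = 1})
                  - real (card {q \<in> perms n. (\<forall>i\<in>{1..n}. p i \<noteq> q i) \<and> q 1 = 2})"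
      using finite_perms by (simp add: sum_subtractf Int_def)
    also have "\<dots> = (if p 1 = 1 then 0 else d) - (if p 1 = 2 then 0 else d)"
      using N[of 1] N[of 2] assms by simp
    also have "\<dots> = - (real (derangements_count n) / (real n - 1)) * v p"
      by (auto simp: v_def d_def)
    finally show "(\<Sum>j\<in>perms n. perm_graph_adj n p j * v j)
        = - real (derangements_count n) / (real n - 1) * v p" by simp
  qed
qed

end
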